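(* Let $\mathsf M$ be an oriented matroid with set of topes $\mathcal T$ and tope-pairs poset $\mathcal Q$. For $(R,T)\in\mathcal Q$ set $\rho(R,T):=(-T,R)$. Then $\rho$ is a poset isomorphism $\mathcal Q\to\mathcal Q^{op}$, and $\rho^4=\mathrm{id}$.
   Context: Topes of an oriented matroid on ground set $E$ are sign vectors in $\{+,-,0\}^E$ (the maximal covectors); $-T$ is componentwise negation, and the negative of a tope is a tope. The separating set of sign vectors is $S(X,Y)=\{e\in E: X_e=-Y_e\neq0\}$; for a tope $B$, $T\le_B R$ iff $S(B,T)\subseteq S(B,R)$. The tope-pairs poset $\mathcal Q$ is $\mathcal T\times\mathcal T$ with $(T,R)\le(T',R')$ iff $T\le_{T'}R\le_{T'}R'$. $\mathcal Q^{op}$ is the same set with the reversed order. *)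

theory Defs
  imports Main
begin

datatype sign = Pos | Neg | Zero

type_synonym 'e signvec = "'e \<Rightarrow> sign"

fun sneg :: "sign \<Rightarrow> sign" where
  "sneg Pos = Neg" | "sneg Neg = Pos" | "sneg Zero = Zero"

definition vneg :: "'e signvec \<Rightarrow> 'e signvec" where
  "vneg X = (\<lambda>e. sneg (X e))"

definition zero_vec :: "'e signvec" where
  "zero_vec = (\<lambda>e. Zero)"

definition vcomp :: "'e signvec \<Rightarrow> 'e signvec \<Rightarrow> 'e signvec" where
  "vcomp X Y = (\<lambda>e. if X e \<noteq> Zero then X e else Y e)"

definition sep :: "'e set \<Rightarrow> 'e signvec \<Rightarrow> 'e signvec \<Rightarrow> 'e set" where
  "sep E X Y = {e \<in> E. X e = sneg (Y e) \<and> X e \<noteq> Zero}"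

definition conf_le :: "'e set \<Rightarrow> 'e signvec \<Rightarrow> 'e signvec \<Rightarrow> bool" where
  "conf_le E X Y \<longleftrightarrow> (\<forall>e\<in>E. X e = Zero \<or> X e = Y e)"

text \<open>Covector axioms for an oriented matroid on the finite ground set E;
  sign vectors are functions vanishing outside E.\<close>
definition oriented_matroid :: "'e set \<Rightarrow> 'e signvec set \<Rightarrow> bool" where
  "oriented_matroid E L \<longleftrightarrow>
     finite E \<and>
     (\<forall>X\<in>L. \<forall>e. e \<notin> E \<longrightarrow> X e = Zero) \<and>
     zero_vec \<in> L \<and>
     (\<forall>X\<in>L. vneg X \<in> L) \<and>
     (\<forall>X\<in>L. \<forall>Y\<in>L. vcomp X Y \<in> L) \<and>
     (\<forall>X\<in>L. \<forall>Y\<in>L. \<forall>e\<in>sep E X Y. \<exists>Z\<in>L. Z e = Zero \<and>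
         (\<forall>f\<in>E - sep E X Y. Z f = vcomp X Y f))"

definition topes :: "'e set \<Rightarrow> 'e signvec set \<Rightarrow> 'e signvec set" where
  "topes E L = {T \<in> L. \<forall>X\<in>L. conf_le E T X \<longrightarrow> X = T}"

definition tope_le :: "'e set \<Rightarrow> 'e signvec \<Rightarrow> 'e signvec \<Rightarrow> 'e signvec \<Rightarrow> bool" where
  "tope_le E B T R \<longleftrightarrow> sep E B T \<subseteq> sep E B R"

definition Q_le :: "'e set \<Rightarrow> 'e signvec \<times> 'e signvec \<Rightarrow> 'e signvec \<times> 'e signvec \<Rightarrow> bool" where
  "Q_le E p q \<longleftrightarrow> (case p of (T, R) \<Rightarrow> case q of (T', R') \<Rightarrow>
      tope_le E T' T R \<and> tope_le E T' R R')"

definition rho :: "'e signvec \<times> 'e signvec \<Rightarrow> 'e signvec \<times> 'e signvec" where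
  "rho p = (case p of (R, T) \<Rightarrow> (vneg T, R))"

end

theory Submission
  imports Defs
begin

lemma sneg_sneg[simp]: "sneg (sneg x) = x" by (cases x) auto
lemma vneg_vneg[simp]: "vneg (vneg X) = X" by (simp add: vneg_def)

lemma tope_supp:
  assumes om: "oriented_matroid E L" and T: "T \<in> topes E L" and T': "T' \<in> topes E L"
    and e: "e \<in> E" and z: "T e = Zero"
  shows "T' e = Zero"
proof -
  have "vcomp T T' \<in> L" using om T T' by (auto simp: oriented_matroid_def topes_def)
  moreover have "conf_le E T (vcomp T T')" by (auto simp: conf_le_def vcomp_def)
  ultimately have "vcomp T T' = T" using T by (auto simp: topes_def)
  hence "vcomp T T' e = T e" by simp
  thus ?thesis using z by (simp add: vcomp_def)
qed

lemma tope_vneg: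
  assumes om: "oriented_matroid E L" and T: "T \<in> topes E L"
  shows "vneg T \<in> topes E L"
proof -
  have TL: "T \<in> L" using T by (simp add: topes_def)
  have "vneg T \<in> L" using om TL by (simp add: oriented_matroid_def)
  moreover have "X = vneg T" if X: "X \<in> L" "conf_le E (vneg T) X" for X
  proof -
    have "vneg X \<in> L" using om X by (simp add: oriented_matroid_def)
    moreover have "conf_le E T (vneg X)" using X(2)
      by (auto simp: conf_le_def vneg_def) (metis sneg.simps(3) sneg_sneg)
    ultimately have "vneg X = T" using T by (auto simp: topes_def)
    thus ?thesis by (metis vneg_vneg)
  qed
  ultimately show ?thesis by (auto simp: topes_def)
qed

lemma sign_cases: "x = Pos \<or> x = Neg \<or> x = Zero" by (cases x) auto

lemma sep_char:
  assumes om: "oriented_matroid E L" and A: "A \<in> topes E L" and B: "B \<in> topes E L"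
  shows "sep E A B = {e\<in>E. A e \<noteq> Zero \<and> A e \<noteq> B e}"
proof -
  have "A e = sneg (B e) \<and> A e \<noteq> Zero \<longleftrightarrow> A e \<noteq> Zero \<and> A e \<noteq> B e" if "e \<in> E" for e
  proof -
    have "A e = Zero \<longleftrightarrow> B e = Zero" using tope_supp[OF om A B that] tope_supp[OF om B A that] by blast
    thus ?thesis using sign_cases[of "A e"] sign_cases[of "B e"] by auto
  qed
  thus ?thesis by (auto simp: sep_def)
qed

theorem lemma3p13:
  fixes E :: "'e set" and L :: "'e signvec set"
  assumes "oriented_matroid E L"
  shows "bij_betw rho (topes E L \<times> topes E L) (topes E L \<times> topes E L)
    \<and> (\<forall>p\<in>topes E L \<times> topes E L. \<forall>q\<in>topes E L \<times> topes E L.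
          Q_le E p q \<longleftrightarrow> Q_le E (rho q) (rho p))
    \<and> (\<forall>p\<in>topes E L \<times> topes E L. (rho ^^ 4) p = p)"
proof (intro conjI ballI)
  let ?P = "topes E L \<times> topes E L"
  have r4: "(rho ^^ 4) p = p" for p
    by (cases p) (simp add: rho_def numeral_eq_Suc)
  thus "\<And>p. (rho ^^ 4) p = p" .
  show "bij_betw rho ?P ?P"
  proof (rule bij_betw_imageI)
    show "inj_on rho ?P" by (rule inj_onI) (auto simp: rho_def split: prod.splits, metis vneg_vneg)
    show "rho ` ?P = ?P"
    proof
      show "rho ` ?P \<subseteq> ?P" using tope_vneg[OF assms] by (auto simp: rho_def)
      show "?P \<subseteq> rho ` ?P"
      proof
        fix p assume p: "p \<in> ?P"
        obtain R T where pe: "p = (R, T)" by (cases p)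
        have "rho (T, vneg R) = p" by (simp add: rho_def pe)
        moreover have "(T, vneg R) \<in> ?P" using p pe tope_vneg[OF assms] by auto
        ultimately show "p \<in> rho ` ?P" by force
      qed
    qed
  qed
  fix p q assume p: "p \<in> ?P" and q: "q \<in> ?P"
  obtain T R where pe: "p = (T, R)" by (cases p)
  obtain T' R' where qe: "q = (T', R')" by (cases q)
  have tT: "T \<in> topes E L" and tR: "R \<in> topes E L" and tT': "T' \<in> topes E L"
    and tR': "R' \<in> topes E L" using p q pe qe by auto
  note nR = tope_vneg[OF assms tR] and nR' = tope_vneg[OF assms tR']
  note sc = sep_char[OF assms]
  have Z: "\<And>X Y e. X \<in> topes E L \<Longrightarrow> Y \<in> topes E L \<Longrightarrow> e \<in> E \<Longrightarrow> X e = Zero \<longleftrightarrow> Y e = Zero"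
    using tope_supp[OF assms] by blast
  have pw: "\<And>e. e \<in> E \<Longrightarrow> (T e = Zero \<longleftrightarrow> R e = Zero) \<and> (T e = Zero \<longleftrightarrow> T' e = Zero)
       \<and> (T e = Zero \<longleftrightarrow> R' e = Zero)"
    using Z tT tR tT' tR' by blast
  have ng: "\<And>X e. vneg X e = sneg (X e)" by (simp add: vneg_def)
  show "Q_le E p q \<longleftrightarrow> Q_le E (rho q) (rho p)"
    unfolding pe qe rho_def Q_le_def tope_le_def
    apply (simp add: sc[OF tT' tT] sc[OF tT' tR] sc[OF tT' tR'] sc[OF nR nR'] sc[OF nR tT'] sc[OF nR tT] ng)
    apply (auto simp: subset_iff)
    apply (metis pw sign_cases sneg.simps)+
    done
qed

end
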